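(* Let $p,N\in\mathbb{N}$, $x_0<\cdots<x_N$, data $y_{n,2k}\in\mathbb{R}$ ($n=0,\dots,N$, $k=0,\dots,p$), and $\alpha\in\Theta_{2p}$. Let $\ell_\alpha$ be the Lidstone FIF and $\phi$ the classical Lidstone interpolation function for this data. Then $$\|\ell_\alpha-\phi\|_\infty\le\frac{|\alpha|_\infty}{1-|\alpha|_\infty}\big(\|\phi\|_\infty+M_{0,2p}\big),\qquad M_{0,2p}=\frac{2\rho\pi}{3}\sum_{l=0}^{p}\Big(\frac{x_N-x_0}{\pi}\Big)^{2l}.$$
   Context: Lidstone polynomials $\Lambda_l$: $\Lambda_0(x)=x$, $\Lambda_l''=\Lambda_{l-1}$, $\Lambda_l(0)=\Lambda_l(1)=0$ for $l\ge1$. $a_n=\frac{x_n-x_{n-1}}{x_N-x_0}$, $L_n(x)=a_nx+\frac{x_Nx_{n-1}-x_0x_n}{x_N-x_0}$. $\Theta_{2p}=\{\alpha\in\mathbb{R}^N:|\alpha_n|<a_n^{2p}\ \forall n\}$. For $\alpha\in\Theta_{2p}$, the Lidstone FIF $\ell_\alpha$ is the unique $C^{2p}[x_0,x_N]$ function satisfying $\ell_\alpha(L_n(x))=\alpha_n\ell_\alpha(x)+q_n(x)$ for $x\in[x_0,x_N]$, $n=1,\dots,N$, where $q_n(x)=\sum_{l=0}^p[(a_n^{2l}y_{n-1,2l}-\alpha_ny_{0,2l})\Lambda_l(\frac{x_N-x}{x_N-x_0})+(a_n^{2l}y_{n,2l}-\alpha_ny_{N,2l})\Lambda_l(\frac{x-x_0}{x_N-x_0})](x_N-x_0)^{2l}$;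 it satisfies $\ell_\alpha^{(2k)}(x_n)=y_{n,2k}$. The classical Lidstone interpolation function $\phi$ is defined on each $[x_{n-1},x_n]$, with $h_n=x_n-x_{n-1}$, by $\phi(x)=\sum_{l=0}^p\big[y_{n-1,2l}\Lambda_l(\frac{x_n-x}{h_n})+y_{n,2l}\Lambda_l(\frac{x-x_{n-1}}{h_n})\big]h_n^{2l}$ (it equals $\ell_0$). Notation: $|\alpha|_\infty=\max_n|\alpha_n|$, $\|f\|_\infty=\sup_{[x_0,x_N]}|f|$, $\rho=\max_{0\le k\le p}\max\{|y_{0,2k}|,|y_{N,2k}|\}$. *)

theory Defs
  imports "HOL-Analysis.Analysis"
begin

fun Lidstone :: "nat \<Rightarrow> real \<Rightarrow> real" where
  "Lidstone 0 = (\<lambda>x. x)"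
| "Lidstone (Suc l) = (THE f. (\<exists>f'. \<forall>t. (f has_real_derivative f' t) (at t) \<and>
        (f' has_real_derivative Lidstone l t) (at t)) \<and> f 0 = 0 \<and> f 1 = 0)"

definition C_k_on :: "nat \<Rightarrow> real \<Rightarrow> real \<Rightarrow> (real \<Rightarrow> real) \<Rightarrow> bool" where
  "C_k_on m a b f \<longleftrightarrow> (\<exists>D :: nat \<Rightarrow> real \<Rightarrow> real. (\<forall>t\<in>{a..b}. D 0 t = f t) \<and>
     (\<forall>k<m. \<forall>t\<in>{a..b}. (D k has_real_derivative D (Suc k) t) (at t within {a..b})) \<and>
     continuous_on {a..b} (D m))"

definition a_coef :: "(nat \<Rightarrow> real) \<Rightarrow> nat \<Rightarrow> nat \<Rightarrow> real" where
  "a_coef x N n = (x n - x (n - 1)) / (x N - x 0)"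

definition L_map :: "(nat \<Rightarrow> real) \<Rightarrow> nat \<Rightarrow> nat \<Rightarrow> real \<Rightarrow> real" where
  "L_map x N n t = a_coef x N n * t + (x N * x (n - 1) - x 0 * x n) / (x N - x 0)"

definition Theta :: "(nat \<Rightarrow> real) \<Rightarrow> nat \<Rightarrow> nat \<Rightarrow> (nat \<Rightarrow> real) set" where
  "Theta x N p = {\<alpha>. \<forall>n\<in>{1..N}. \<bar>\<alpha> n\<bar> < a_coef x N n ^ (2 * p)}"

text \<open>q_n; data y n (2k) = y_{n,2k}.\<close>
definition q_fun :: "(nat \<Rightarrow> real) \<Rightarrow> (nat \<Rightarrow> nat \<Rightarrow> real) \<Rightarrow> nat \<Rightarrow> nat \<Rightarrow>
    (nat \<Rightarrow> real) \<Rightarrow> nat \<Rightarrow> real \<Rightarrow> real" where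
  "q_fun x y N p \<alpha> n t = (\<Sum>l=0..p.
     ((a_coef x N n ^ (2*l) * y (n - 1) (2*l) - \<alpha> n * y 0 (2*l)) *
        Lidstone l ((x N - t) / (x N - x 0))
    + (a_coef x N n ^ (2*l) * y n (2*l) - \<alpha> n * y N (2*l)) *
        Lidstone l ((t - x 0) / (x N - x 0))) * (x N - x 0) ^ (2*l))"

definition is_Lidstone_FIF :: "(nat \<Rightarrow> real) \<Rightarrow> (nat \<Rightarrow> nat \<Rightarrow> real) \<Rightarrow> nat \<Rightarrow> nat \<Rightarrow>
    (nat \<Rightarrow> real) \<Rightarrow> (real \<Rightarrow> real) \<Rightarrow> bool" where
  "is_Lidstone_FIF x y N p \<alpha> f \<longleftrightarrow> C_k_on (2*p) (x 0) (x N) f \<and>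
     (\<forall>n\<in>{1..N}. \<forall>t\<in>{x 0..x N}. f (L_map x N n t) = \<alpha> n * f t + q_fun x y N p \<alpha> n t)"

definition Lidstone_piece :: "(nat \<Rightarrow> real) \<Rightarrow> (nat \<Rightarrow> nat \<Rightarrow> real) \<Rightarrow> nat \<Rightarrow> nat \<Rightarrow> real \<Rightarrow> real" where
  "Lidstone_piece x y p n t = (let h = x n - x (n - 1) in
     (\<Sum>l=0..p. (y (n - 1) (2*l) * Lidstone l ((x n - t) / h)
                 + y n (2*l) * Lidstone l ((t - x (n - 1)) / h)) * h ^ (2*l)))"

text \<open>On [x_0,x_N], use the piece of the first interval [x_{n-1},x_n] containing t
 (pieces agree at the nodes).\<close>
definition Lidstone_interp :: "(nat \<Rightarrow> real) \<Rightarrow> (nat \<Rightarrow> nat \<Rightarrow> real) \<Rightarrow> nat \<Rightarrow> real \<Rightarrow> real" where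
  "Lidstone_interp x y p t = Lidstone_piece x y p (LEAST n. 1 \<le> n \<and> t \<le> x n) t"

definition sup_norm :: "real \<Rightarrow> real \<Rightarrow> (real \<Rightarrow> real) \<Rightarrow> real" where
  "sup_norm a b f = (SUP t\<in>{a..b}. \<bar>f t\<bar>)"

definition alpha_norm :: "nat \<Rightarrow> (nat \<Rightarrow> real) \<Rightarrow> real" where
  "alpha_norm N \<alpha> = Max ((\<lambda>n. \<bar>\<alpha> n\<bar>) ` {1..N})"

definition rho :: "(nat \<Rightarrow> nat \<Rightarrow> real) \<Rightarrow> nat \<Rightarrow> nat \<Rightarrow> real" where
  "rho y N p = Max ((\<lambda>k. max \<bar>y 0 (2*k)\<bar> \<bar>y N (2*k)\<bar>) ` {0..p})"

definition M0 :: "(nat \<Rightarrow> real) \<Rightarrow> (nat \<Rightarrow> nat \<Rightarrow> real) \<Rightarrow> nat \<Rightarrow> nat \<Rightarrow> real" where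
  "M0 x y N p = 2 * rho y N p * pi / 3 * (\<Sum>l=0..p. ((x N - x 0) / pi) ^ (2*l))"

end

theory Submission
  imports Defs "HOL-Computational_Algebra.Polynomial"
begin


lemma poly_antideriv: "\<exists>q::real poly. pderiv q = p"
proof -
  let ?q = "\<Sum>i\<le>degree p. monom (coeff p i / real (Suc i)) (Suc i)"
  have "pderiv ?q = (\<Sum>i\<le>degree p. monom (coeff p i) i)"
    using higher_pderiv_sum[of 1 "\<lambda>i. monom (coeff p i / real (Suc i)) (Suc i)" "{..degree p}"]
    by (simp add: pderiv_monom)
  also have "\<dots> = p" by (rule poly_as_sum_of_monoms)
  finally show ?thesis by blast
qed

definition LidP :: "nat \<Rightarrow> (real \<Rightarrow> real) \<Rightarrow> (real \<Rightarrow> real) \<Rightarrow> bool" where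
  "LidP l f f' \<longleftrightarrow> (\<forall>t. (f has_real_derivative f' t) (at t) \<and>
        (f' has_real_derivative Lidstone l t) (at t)) \<and> f 0 = 0 \<and> f 1 = 0"

lemma Lid_unique:
  assumes "LidP l f f'" "LidP l g g'" shows "f = g"
proof -
  have d1: "\<And>t. ((\<lambda>t. f' t - g' t) has_real_derivative 0) (at t)"
    using assms unfolding LidP_def by (metis (no_types) DERIV_diff diff_self)
  then obtain c where c: "\<And>t. f' t - g' t = c"
    using DERIV_isconst_all by blast
  have d2: "\<And>t. ((\<lambda>t. f t - g t - c * t) has_real_derivative 0) (at t)"
  proof -
    fix t
    have "((\<lambda>t. f t - g t - c * t) has_real_derivative (f' t - g' t - c)) (at t)"
      using assms unfolding LidP_def by (auto intro!: derivative_eq_intros)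
    then show "((\<lambda>t. f t - g t - c * t) has_real_derivative 0) (at t)" using c by simp
  qed
  have e: "\<And>t. f t - g t - c * t = f 0 - g 0 - c * 0"
    using DERIV_isconst_all[OF allI[OF d2]] by blast
  have "c = 0" using e[of 1] assms unfolding LidP_def by simp
  then show ?thesis using e assms unfolding LidP_def by (auto simp: fun_eq_iff)
qed

lemma Lid_exists:
  assumes "Lidstone l = poly p" shows "\<exists>q f'. LidP l (poly q) f'"
proof -
  obtain q where q: "pderiv q = p" using poly_antideriv by blast
  obtain r where r: "pderiv r = q" using poly_antideriv by blast
  define s where "s = r - [:poly r 0, poly r 1 - poly r 0:]"
  have "LidP l (poly s) (poly (pderiv s))"
    unfolding LidP_def
  proof (intro conjI allI)
    fix t
    show "(poly s has_real_derivative poly (pderiv s) t) (at t)" by simp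
    have "pderiv (pderiv s) = p" unfolding s_def by (simp add: pderiv_diff r q pderiv_pCons)
    then show "(poly (pderiv s) has_real_derivative Lidstone l t) (at t)"
      using poly_DERIV[of "pderiv s" t] assms by simp
  qed (simp_all add: s_def)
  then show ?thesis by blast
qed

lemma Lid_poly: "\<exists>p. Lidstone l = poly p"
proof (induction l)
  case 0
  have "Lidstone 0 = poly [:0,1:]" by (simp add: fun_eq_iff)
  then show ?case by blast
next
  case (Suc l)
  then obtain p where "Lidstone l = poly p" by blast
  then obtain q f' where q: "LidP l (poly q) f'" using Lid_exists by blast
  have "Lidstone (Suc l) = (THE f. \<exists>f'. LidP l f f')" by (simp add: LidP_def)
  also have "\<dots> = poly q"
    using q Lid_unique by (intro the_equality) blast+
  finally show ?case by blast
qed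

lemma Lid_Suc: "\<exists>f'. LidP l (Lidstone (Suc l)) f'"
proof -
  obtain p where "Lidstone l = poly p" using Lid_poly by blast
  then obtain q f' where q: "LidP l (poly q) f'" using Lid_exists by blast
  have "Lidstone (Suc l) = (THE f. \<exists>f'. LidP l f f')" by (simp add: LidP_def)
  also have "\<dots> = poly q"
    using q Lid_unique by (intro the_equality) blast+
  finally show ?thesis using q by auto
qed

lemma Lid_Suc_eq: "LidP l f f' \<Longrightarrow> Lidstone (Suc l) = f"
  using Lid_Suc Lid_unique by blast

lemma Lid_cont: "continuous_on S (Lidstone l)"
  proof -
  obtain p where "Lidstone l = poly p" using Lid_poly by blast
  then show ?thesis using continuous_on_poly[of S "\<lambda>x. x" p] by (simp add: continuous_on_id)
qed




lemma convex_zero_le: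
  fixes w w' w'' :: "real \<Rightarrow> real"
  assumes d: "\<And>t. (w has_real_derivative w' t) (at t)" "\<And>t. (w' has_real_derivative w'' t) (at t)"
    and nn: "\<And>t. 0 \<le> t \<Longrightarrow> t \<le> 1 \<Longrightarrow> w'' t \<ge> 0"
    and e: "w 0 = 0" "w 1 = 0" and t: "0 \<le> t" "t \<le> 1"
  shows "w t \<le> 0"
proof (rule ccontr)
  assume "\<not> w t \<le> 0"
  hence pos: "w t > 0" by simp
  hence t0: "0 < t" "t < 1" using e t by (auto simp: order.order_iff_strict)
  obtain z1 where z1: "0 < z1" "z1 < t" "w t - w 0 = (t - 0) * w' z1"
    using MVT2[OF t0(1), of w w'] d by blast
  obtain z2 where z2: "t < z2" "z2 < 1" "w 1 - w t = (1 - t) * w' z2"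
    using MVT2[OF t0(2), of w w'] d by blast
  have a: "w' z1 > 0" using z1 e pos t0 by (metis diff_zero zero_less_mult_pos)
  have b: "w' z2 < 0" using z2 e pos t0
  proof -
    have "(1 - t) * w' z2 < 0" using z2 e pos by simp
    then show ?thesis using t0 by (simp add: mult_less_0_iff)
  qed
  have "z1 < z2" using z1 z2 by simp
  then obtain z3 where z3: "z1 < z3" "z3 < z2" "w' z2 - w' z1 = (z2 - z1) * w'' z3"
    using MVT2[of z1 z2 w' w''] d by blast
  have "w'' z3 \<ge> 0" using nn z3 z1 z2 by auto
  then have "w' z2 - w' z1 \<ge> 0" using z3 by simp
  then show False using a b by simp
qed

lemma cos_lb: "(x::real) \<ge> 0 \<Longrightarrow> cos x \<ge> 1 - x^2/2"
proof -
  assume x: "x \<ge> 0"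
  have H: "\<exists>d. ((\<lambda>x. cos x - 1 + x^2/2) has_real_derivative d) (at y) \<and> d \<ge> 0" if "0 \<le> y" for y :: real
  proof (intro exI conjI)
    show "((\<lambda>x. cos x - 1 + x^2/2) has_real_derivative (-sin y + y)) (at y)"
      by (auto intro!: derivative_eq_intros)
    show "-sin y + y \<ge> 0" using sin_x_le_x[OF that] by linarith
  qed
  have "(\<lambda>x. cos x - 1 + x^2/2) 0 \<le> (\<lambda>x. cos x - 1 + x^2/2) x"
    by (rule DERIV_nonneg_imp_nondecreasing[OF x]) (use H in auto)
  then show ?thesis by simp
qed

lemma sin_lb: "(x::real) \<ge> 0 \<Longrightarrow> sin x \<ge> x - x^3/6"
proof -
  assume x: "x \<ge> 0"
  have H: "\<exists>d. ((\<lambda>x. sin x - x + x^3/6) has_real_derivative d) (at y) \<and> d \<ge> 0" if "0 \<le> y" for y :: real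
  proof (intro exI conjI)
    show "((\<lambda>x. sin x - x + x^3/6) has_real_derivative (cos y - 1 + y^2/2)) (at y)"
      by (auto intro!: derivative_eq_intros)
    show "cos y - 1 + y^2/2 \<ge> 0" using cos_lb[OF that] by linarith
  qed
  have "(\<lambda>x. sin x - x + x^3/6) 0 \<le> (\<lambda>x. sin x - x + x^3/6) x"
    by (rule DERIV_nonneg_imp_nondecreasing[OF x]) (use H in auto)
  then show ?thesis by simp
qed

lemma cos_ub: "(x::real) \<ge> 0 \<Longrightarrow> cos x \<le> 1 - x^2/2 + x^4/24"
proof -
  assume x: "x \<ge> 0"
  have H: "\<exists>d. ((\<lambda>x. 1 - x^2/2 + x^4/24 - cos x) has_real_derivative d) (at y) \<and> d \<ge> 0" if "0 \<le> y" for y :: real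
  proof (intro exI conjI)
    show "((\<lambda>x. 1 - x^2/2 + x^4/24 - cos x) has_real_derivative (-y + y^3/6 + sin y)) (at y)"
      by (auto intro!: derivative_eq_intros simp: field_simps)
    show "-y + y^3/6 + sin y \<ge> 0" using sin_lb[OF that] by linarith
  qed
  have "(\<lambda>x. 1 - x^2/2 + x^4/24 - cos x) 0 \<le> (\<lambda>x. 1 - x^2/2 + x^4/24 - cos x) x"
    by (rule DERIV_nonneg_imp_nondecreasing[OF x]) (use H in auto)
  then show ?thesis by simp
qed

lemma pi_lt: "pi < 3.2"
proof (rule ccontr)
  assume "\<not> pi < 3.2"
  then have "1.6 \<le> pi/2" by simp
  then have "cos (1.6::real) \<ge> 0" by (intro cos_ge_zero) auto
  moreover have "cos (1.6::real) \<le> 1 - 1.6^2/2 + 1.6^4/24" by (rule cos_ub) simp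
  moreover have "1 - (1.6::real)^2/2 + 1.6^4/24 < 0" by (simp add: power_divide)
  ultimately show False by linarith
qed

lemma pi_sq: "pi^2 < 10.24"
proof -
  have "pi^2 < 3.2^2" using pi_lt by (intro power_strict_mono) auto
  then show ?thesis by (simp add: power_divide)
qed

lemma base_ineq:
  fixes t :: real assumes t: "0 \<le> t" "t \<le> 1"
  shows "pi * (t - t^3) / 2 \<le> sin (pi * t)"
proof (cases "t \<le> 1/2")
  case True
  have "pi^2 * t^2 \<le> 10.24 * (1/4)"
  proof (rule mult_mono)
    show "t^2 \<le> 1/4" using True t power_mono[of t "1/2" 2] by (simp add: power2_eq_square)
  qed (use pi_sq in auto)
  then have c: "0 \<le> 3 - pi^2 * t^2 + 3 * t^2" using t by simp
  have "sin (pi * t) - pi * (t - t^3) / 2 \<ge> (pi * t) - (pi * t)^3/6 - pi * (t - t^3) / 2"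
    using sin_lb[of "pi * t"] t by simp
  also have "(pi * t) - (pi * t)^3/6 - pi * (t - t^3) / 2 = (pi * t/6) * (3 - pi^2 * t^2 + 3 * t^2)"
    by (simp add: field_simps power2_eq_square power3_eq_cube)
  also have "\<dots> \<ge> 0" using c t by simp
  finally show ?thesis by simp
next
  case False
  define s where "s = 1 - t"
  have s: "0 \<le> s" "s \<le> 1/2" using False t by (auto simp: s_def)
  have "pi^2 * s \<le> 10.24 * (1/2)"
    using pi_sq s by (intro mult_mono) auto
  then have c: "0 \<le> 9 - s * (pi^2 + 3)" using s by (simp add: algebra_simps)
  have "sin (pi * t) = sin (pi * s)"
    by (simp add: s_def right_diff_distrib sin_diff)
  then have "sin (pi * t) - pi * (t - t^3) / 2 \<ge> (pi * s) - (pi * s)^3/6 - pi * (t - t^3) / 2"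
    using sin_lb[of "pi * s"] s by simp
  also have "(pi * s) - (pi * s)^3/6 - pi * (t - t^3) / 2 = (pi * s^2/6) * (9 - s * (pi^2 + 3))"
    by (simp add: s_def field_simps power2_eq_square power3_eq_cube)
  also have "\<dots> \<ge> 0" using c s by simp
  finally show ?thesis by simp
qed




lemma Lid1: "Lidstone 1 = (\<lambda>t. (t^3 - t)/6)"
proof -
  have "LidP 0 (\<lambda>t. (t^3 - t)/6) (\<lambda>t. (3*t^2 - 1)/6)"
    unfolding LidP_def
    by (auto intro!: derivative_eq_intros simp: field_simps power2_eq_square)
  then show ?thesis using Lid_Suc_eq[of 0] by simp
qed

lemma Lid_bound:
  fixes t :: real assumes t: "0 \<le> t" "t \<le> 1"
  shows "\<bar>Lidstone (Suc l) t\<bar> \<le> sin (pi * t) / (3 * pi ^ (2*l+1))"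
  using t
proof (induction l arbitrary: t)
  case 0
  have "t^3 \<le> t" using 0 power_le_one[of t 2] mult_left_mono[of "t^2" 1 t]
    by (simp add: power3_eq_cube power2_eq_square)
  then have "\<bar>Lidstone (Suc 0) t\<bar> = (t - t^3) / 6" using Lid1 by simp
  also have "\<dots> \<le> sin (pi * t) / (3 * pi)" using base_ineq[OF 0] by (simp add: field_simps)
  finally show ?case by simp
next
  case (Suc l)
  define c where "c = 1 / (3 * pi ^ (2*l+1))"
  have IH: "\<And>t. 0 \<le> t \<Longrightarrow> t \<le> 1 \<Longrightarrow> \<bar>Lidstone (Suc l) t\<bar> \<le> c * sin (pi * t)"
    using Suc.IH unfolding c_def by (simp add: field_simps)
  obtain f' where F: "LidP (Suc l) (Lidstone (Suc (Suc l))) f'" using Lid_Suc by blast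
  let ?F = "Lidstone (Suc (Suc l))"
  have d1: "\<And>t. (?F has_real_derivative f' t) (at t)"
   and d2: "\<And>t. (f' has_real_derivative Lidstone (Suc l) t) (at t)"
   and e: "?F 0 = 0" "?F 1 = 0" using F unfolding LidP_def by auto
  have A: "?F t - c/pi^2 * sin (pi * t) \<le> 0"
  proof (rule convex_zero_le[where w = "\<lambda>t. ?F t - c/pi^2 * sin (pi * t)" and w' = "\<lambda>t. f' t - c/pi * cos (pi * t)"
        and w'' = "\<lambda>t. Lidstone (Suc l) t + c * sin (pi * t)"])
    fix s
    show "((\<lambda>t. ?F t - c/pi^2 * sin (pi * t)) has_real_derivative f' s - c/pi * cos (pi * s)) (at s)"
      by (rule derivative_eq_intros d1 refl | simp add: power2_eq_square)+
    show "((\<lambda>t. f' t - c/pi * cos (pi * t)) has_real_derivative Lidstone (Suc l) s + c * sin (pi * s)) (at s)"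
      by (rule derivative_eq_intros d2 refl | simp)+
  next
    fix s :: real assume "0 \<le> s" "s \<le> 1"
    then show "0 \<le> Lidstone (Suc l) s + c * sin (pi * s)" using IH[of s] by linarith
  qed (use e Suc.prems in auto)
  have B: "- ?F t - c/pi^2 * sin (pi * t) \<le> 0"
  proof (rule convex_zero_le[where w = "\<lambda>t. - ?F t - c/pi^2 * sin (pi * t)" and w' = "\<lambda>t. - f' t - c/pi * cos (pi * t)"
        and w'' = "\<lambda>t. - Lidstone (Suc l) t + c * sin (pi * t)"])
    fix s
    show "((\<lambda>t. - ?F t - c/pi^2 * sin (pi * t)) has_real_derivative - f' s - c/pi * cos (pi * s)) (at s)"
      by (rule derivative_eq_intros d1 refl | simp add: power2_eq_square)+
    show "((\<lambda>t. - f' t - c/pi * cos (pi * t)) has_real_derivative - Lidstone (Suc l) s + c * sin (pi * s)) (at s)"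
      by (rule derivative_eq_intros d2 refl | simp)+
  next
    fix s :: real assume "0 \<le> s" "s \<le> 1"
    then show "0 \<le> - Lidstone (Suc l) s + c * sin (pi * s)" using IH[of s] by linarith
  qed (use e Suc.prems in auto)
  have "c/pi^2 = 1 / (3 * pi ^ (2 * Suc l + 1))" unfolding c_def by (simp add: field_simps power2_eq_square)
  then show ?case using A B by (simp add: abs_le_iff)
qed

lemma Lid_pair_bound:
  fixes u :: real assumes u: "0 \<le> u" "u \<le> 1"
  shows "\<bar>Lidstone l u\<bar> + \<bar>Lidstone l (1 - u)\<bar> \<le> 2 * pi / 3 / pi ^ (2*l)"
proof (cases l)
  case 0
  then show ?thesis using u pi_gt3 by simp
next
  case (Suc k)
  have s: "sin (pi * u) \<le> 1" "sin (pi * (1 - u)) = sin (pi * u)"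
    by (auto simp: right_diff_distrib sin_diff)
  have "\<bar>Lidstone l u\<bar> + \<bar>Lidstone l (1 - u)\<bar> \<le> 2 * (sin (pi * u) / (3 * pi ^ (2*k+1)))"
    using Lid_bound[of u k] Lid_bound[of "1-u" k] u Suc s by simp
  also have "\<dots> \<le> 2 * (1 / (3 * pi ^ (2*k+1)))"
    using s by (intro mult_left_mono divide_right_mono) auto
  also have "\<dots> = 2 * pi / 3 / pi ^ (2*l)" using Suc by (simp add: field_simps)
  finally show ?thesis .
qed




lemma Lid_cont' [continuous_intros]:
  "continuous_on S g \<Longrightarrow> continuous_on S (\<lambda>t. Lidstone l (g t))"
  using continuous_on_compose2[OF Lid_cont[of UNIV l], of S g] by auto

lemma x_mono:
  fixes x :: "nat \<Rightarrow> real"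
  assumes "\<And>n. n < N \<Longrightarrow> x n < x (Suc n)"
  shows "i \<le> j \<Longrightarrow> j \<le> N \<Longrightarrow> x i \<le> x j"
proof (induction j)
  case 0 then show ?case by simp
next
  case (Suc j)
  show ?case
  proof (cases "i = Suc j")
    case False
    then have "x i \<le> x j" using Suc by simp
    also have "x j < x (Suc j)" using assms Suc.prems by simp
    finally show ?thesis by simp
  qed simp
qed

lemma aff1:
  fixes D h :: real
  assumes "D \<noteq> 0" "h \<noteq> 0" "D = xN - x0" "h = xn - xm"
  shows "(xn - (h / D * s + (xN*xm - x0*xn)/D)) / h = (xN - s) / D"
proof -
  have "xn - (h / D * s + (xN*xm - x0*xn)/D) = (xn * D - h * s - xN*xm + x0*xn) / D"
    using assms(1) by (simp add: field_simps)
  also have "xn * D - h * s - xN*xm + x0*xn = h * (xN - s)"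
    unfolding assms(3,4) by (simp add: algebra_simps)
  finally show ?thesis using assms(1,2) by simp
qed

lemma aff2:
  fixes D h :: real
  assumes "D \<noteq> 0" "h \<noteq> 0" "D = xN - x0" "h = xn - xm"
  shows "((h / D * s + (xN*xm - x0*xn)/D) - xm) / h = (s - x0) / D"
proof -
  have "(h / D * s + (xN*xm - x0*xn)/D) - xm = (h * s + xN*xm - x0*xn - xm * D) / D"
    using assms(1) by (simp add: field_simps)
  also have "h * s + xN*xm - x0*xn - xm * D = h * (s - x0)"
    unfolding assms(3,4) by (simp add: algebra_simps)
  finally show ?thesis using assms(1,2) by simp
qed

lemma aff3:
  fixes D h :: real
  assumes "D > 0" "h > 0"
  shows "h / D * (x0 + (t - xm) * D / h) + c / D = (h * x0 + (t - xm) * D + c) / D"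
  using assms by (simp add: field_simps)

lemma piece_identity:
  fixes x :: "nat \<Rightarrow> real"
  assumes D: "x N - x 0 \<noteq> 0" and h: "x n - x (n - 1) \<noteq> 0"
  shows "Lidstone_piece x y p n (L_map x N n s) = q_fun x y N p \<alpha> n s +
     \<alpha> n * (\<Sum>l=0..p. (y 0 (2*l) * Lidstone l ((x N - s) / (x N - x 0))
        + y N (2*l) * Lidstone l ((s - x 0) / (x N - x 0))) * (x N - x 0) ^ (2*l))"
proof -
  let ?D = "x N - x 0" and ?h = "x n - x (n - 1)" and ?a = "a_coef x N n"
  have e1: "(x n - L_map x N n s) / ?h = (x N - s) / ?D"
    unfolding L_map_def a_coef_def using aff1[OF D h refl refl] .
  have e2: "(L_map x N n s - x (n - 1)) / ?h = (s - x 0) / ?D"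
    unfolding L_map_def a_coef_def using aff2[OF D h refl refl] .
  have e3: "?h ^ (2*l) = ?a ^ (2*l) * ?D ^ (2*l)" for l
    using D unfolding a_coef_def by (simp add: power_mult_distrib[symmetric])
  show ?thesis
    unfolding Lidstone_piece_def Let_def q_fun_def e1 e2 e3 sum_distrib_left sum.distrib[symmetric]
    by (rule sum.cong) (simp_all add: algebra_simps)
qed

theorem corollary4p1:
  fixes p N :: nat and x :: "nat \<Rightarrow> real" and y :: "nat \<Rightarrow> nat \<Rightarrow> real"
    and \<alpha> :: "nat \<Rightarrow> real" and f :: "real \<Rightarrow> real"
  assumes "N \<ge> 1"
    and "\<And>n. n < N \<Longrightarrow> x n < x (Suc n)"
    and "\<alpha> \<in> Theta x N p"
    and "is_Lidstone_FIF x y N p \<alpha> f"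
  shows "sup_norm (x 0) (x N) (\<lambda>t. f t - Lidstone_interp x y p t)
    \<le> alpha_norm N \<alpha> / (1 - alpha_norm N \<alpha>) *
       (sup_norm (x 0) (x N) (Lidstone_interp x y p) + M0 x y N p)"
proof -
  note N1 = assms(1) and xinc = assms(2)
  have mono: "\<And>i j. i \<le> j \<Longrightarrow> j \<le> N \<Longrightarrow> x i \<le> x j"
    using x_mono[of N x] xinc by blast
  define D where "D = x N - x 0"
  have Dpos: "D > 0" unfolding D_def using mono[of 1 N] xinc[of 0] N1 by simp
  have hpos: "x (n - 1) < x n" if "n \<in> {1..N}" for n
    using xinc[of "n - 1"] that by auto
  have apos: "0 < a_coef x N n" "a_coef x N n \<le> 1" if "n \<in> {1..N}" for n
  proof -
    show "0 < a_coef x N n" using hpos[OF that] Dpos unfolding a_coef_def D_def by simp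
    have "n - 1 \<le> N" using that by auto
    then have "x n - x (n - 1) \<le> D" using mono[of 0 "n-1"] mono[of n N] that unfolding D_def by auto
    then show "a_coef x N n \<le> 1" using Dpos unfolding a_coef_def D_def by simp
  qed
  define A where "A = alpha_norm N \<alpha>"
  have Ane: "(\<lambda>n. \<bar>\<alpha> n\<bar>) ` {1..N} \<noteq> {}" using N1 by auto
  have Age: "\<bar>\<alpha> n\<bar> \<le> A" if "n \<in> {1..N}" for n
    unfolding A_def alpha_norm_def using that by (intro Max_ge) auto
  have A0: "0 \<le> A" using Age[of 1] N1 by auto
  have A1: "A < 1"
  proof -
    obtain n where n: "n \<in> {1..N}" "A = \<bar>\<alpha> n\<bar>"
      using Max_in[OF _ Ane] unfolding A_def alpha_norm_def by auto
    have "\<bar>\<alpha> n\<bar> < a_coef x N n ^ (2*p)" using assms(3) n unfolding Theta_def by auto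
    also have "\<dots> \<le> 1" using apos[OF n(1)] by (intro power_le_one) auto
    finally show ?thesis using n by simp
  qed
  define B where "B s = (\<Sum>l=0..p. (y 0 (2*l) * Lidstone l ((x N - s) / (x N - x 0))
        + y N (2*l) * Lidstone l ((s - x 0) / (x N - x 0))) * (x N - x 0) ^ (2*l))" for s
  define \<rho> where "\<rho> = rho y N p"
  have rho_ge: "\<bar>y 0 (2*l)\<bar> \<le> \<rho>" "\<bar>y N (2*l)\<bar> \<le> \<rho>" if "l \<in> {0..p}" for l
    unfolding \<rho>_def rho_def using that
    by (intro order_trans[OF _ Max_ge]; force)+
  have B_bound: "\<bar>B s\<bar> \<le> M0 x y N p" if s: "s \<in> {x 0..x N}" for s
  proof -
    define u where "u = (s - x 0) / D"
    have u: "0 \<le> u" "u \<le> 1" using s Dpos unfolding u_def D_def by auto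
    have v: "(x N - s) / D = 1 - u" using Dpos unfolding u_def D_def by (simp add: field_simps)
    have "\<bar>B s\<bar> \<le> (\<Sum>l=0..p. \<bar>(y 0 (2*l) * Lidstone l (1 - u) + y N (2*l) * Lidstone l u) * D ^ (2*l)\<bar>)"
      unfolding B_def D_def[symmetric] unfolding v u_def[symmetric] by (rule sum_abs)
    also have "\<dots> \<le> (\<Sum>l=0..p. \<rho> * (2 * pi / 3 / pi ^ (2*l)) * D ^ (2*l))"
    proof (rule sum_mono)
      fix l assume l: "l \<in> {0..p}"
      have "\<bar>y 0 (2*l) * Lidstone l (1 - u) + y N (2*l) * Lidstone l u\<bar>
          \<le> \<bar>y 0 (2*l)\<bar> * \<bar>Lidstone l (1 - u)\<bar> + \<bar>y N (2*l)\<bar> * \<bar>Lidstone l u\<bar>"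
        by (simp add: abs_mult[symmetric] abs_triangle_ineq)
      also have "\<dots> \<le> \<rho> * \<bar>Lidstone l (1 - u)\<bar> + \<rho> * \<bar>Lidstone l u\<bar>"
        using rho_ge[OF l] by (intro add_mono mult_right_mono) auto
      also have "\<dots> \<le> \<rho> * (2 * pi / 3 / pi ^ (2*l))"
      proof -
        have "0 \<le> \<rho>" using rho_ge[OF l] by linarith
        then have "\<rho> * (\<bar>Lidstone l (1 - u)\<bar> + \<bar>Lidstone l u\<bar>) \<le> \<rho> * (2 * pi / 3 / pi ^ (2*l))"
          using Lid_pair_bound[OF u, of l] by (intro mult_left_mono) auto
        then show ?thesis by (simp add: distrib_left)
      qed
      finally have hh: "\<bar>y 0 (2*l) * Lidstone l (1 - u) + y N (2*l) * Lidstone l u\<bar> \<le> \<rho> * (2 * pi / 3 / pi ^ (2*l))" .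
      show "\<bar>(y 0 (2*l) * Lidstone l (1 - u) + y N (2*l) * Lidstone l u) * D ^ (2*l)\<bar>
          \<le> \<rho> * (2 * pi / 3 / pi ^ (2*l)) * D ^ (2*l)"
      proof -
        have dd: "\<bar>D ^ (2*l)\<bar> = D ^ (2*l)" using Dpos by simp
        show ?thesis unfolding abs_mult dd using Dpos hh
          by (intro mult_right_mono) auto
      qed
    qed
    also have "\<dots> = M0 x y N p"
      unfolding M0_def \<rho>_def[symmetric] D_def[symmetric] sum_distrib_left
      by (rule sum.cong) (simp_all add: power_divide)
    finally show ?thesis .
  qed
  have locate: "\<exists>m s. m \<in> {1..N} \<and> s \<in> {x 0..x N} \<and> t = L_map x N m s \<and>
      x (m - 1) \<le> t \<and> t \<le> x m \<and> Lidstone_interp x y p t = Lidstone_piece x y p m t"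
    if t: "t \<in> {x 0..x N}" for t
  proof -
    define m where "m = (LEAST n. 1 \<le> n \<and> t \<le> x n)"
    have PN: "1 \<le> N \<and> t \<le> x N" using N1 t by auto
    then have P: "1 \<le> m \<and> t \<le> x m" unfolding m_def by (rule LeastI)
    from PN have mN: "m \<le> N" unfolding m_def by (rule Least_le)
    have lo: "x (m - 1) \<le> t"
    proof (cases "m = 1")
      case True then show ?thesis using t by simp
    next
      case False
      then have lt: "m - 1 < m" using P by simp
      have "\<not> (1 \<le> m - 1 \<and> t \<le> x (m - 1))"
        using not_less_Least[of "m - 1" "\<lambda>n. 1 \<le> n \<and> t \<le> x n"] lt unfolding m_def by blast
      then show ?thesis using False P by auto
    qed
    have m: "m \<in> {1..N}" using P mN by auto
    define h where "h = x m - x (m - 1)"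
    have h: "h > 0" using hpos[OF m] unfolding h_def by simp
    define s where "s = x 0 + (t - x (m - 1)) * D / h"
    have "L_map x N m s = t"
    proof -
      have "L_map x N m s = h / D * s + (x N * x (m - 1) - x 0 * x m) / D"
        unfolding L_map_def a_coef_def h_def D_def by simp
      also have "\<dots> = (h * x 0 + (t - x (m - 1)) * D + (x N * x (m - 1) - x 0 * x m)) / D"
        unfolding s_def using aff3[OF Dpos h] .
      also have "h * x 0 + (t - x (m - 1)) * D + (x N * x (m - 1) - x 0 * x m) = t * D"
        unfolding h_def D_def by (simp add: algebra_simps)
      finally show ?thesis using Dpos by simp
    qed
    moreover have "s \<in> {x 0..x N}"
    proof -
      have "0 \<le> (t - x (m - 1)) * D / h" using lo h Dpos by simp
      moreover have "(t - x (m - 1)) * D / h \<le> D"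
      proof -
        have "(t - x (m - 1)) * D \<le> h * D" using P Dpos unfolding h_def by (intro mult_right_mono) auto
        then show ?thesis using h by (simp add: divide_le_eq mult.commute)
      qed
      ultimately show ?thesis unfolding s_def D_def by auto
    qed
    ultimately show ?thesis using m lo P unfolding Lidstone_interp_def m_def[symmetric] by blast
  qed
  define I where "I = {x 0..x N}"
  have fcont: "continuous_on I f"
  proof -
    obtain Dd where Dd: "\<forall>t\<in>I. Dd 0 t = f t"
      "\<forall>k<2*p. \<forall>t\<in>I. (Dd k has_real_derivative Dd (Suc k) t) (at t within I)"
      "continuous_on I (Dd (2*p))"
      using assms(4) unfolding is_Lidstone_FIF_def C_k_on_def I_def by blast
    have "continuous_on I (Dd 0)"
    proof (cases "p = 0")
      case True then show ?thesis using Dd(3) by simp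
    next
      case False
      then show ?thesis using Dd(2) by (intro DERIV_continuous_on[of I _ "Dd 1"]) auto
    qed
    then show ?thesis using Dd(1) continuous_on_eq by metis
  qed
  have "bounded (f ` I)" using compact_imp_bounded[OF compact_continuous_image[OF fcont]] unfolding I_def by simp
  then obtain Kf where Kf0: "\<forall>v\<in>f ` I. \<bar>v\<bar> \<le> Kf" unfolding bounded_real by blast
  have Kf: "\<And>t. t \<in> I \<Longrightarrow> \<bar>f t\<bar> \<le> Kf" using Kf0 by blast
  have pc: "continuous_on S (Lidstone_piece x y p n)" if "n \<in> {1..N}" for S n
    using hpos[OF that] unfolding Lidstone_piece_def Let_def by (intro continuous_intros) auto
  have "bounded (\<Union>n\<in>{1..N}. Lidstone_piece x y p n ` {x (n - 1)..x n})"
    by (intro bounded_UN ballI compact_imp_bounded compact_continuous_image pc) auto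
  then obtain Kp where Kp: "\<And>v. v \<in> (\<Union>n\<in>{1..N}. Lidstone_piece x y p n ` {x (n - 1)..x n}) \<Longrightarrow> \<bar>v\<bar> \<le> Kp"
    unfolding bounded_real by auto
  have phib: "\<bar>Lidstone_interp x y p t\<bar> \<le> Kp" if tI: "t \<in> I" for t
  proof -
    obtain m s where "m \<in> {1..N}" "x (m - 1) \<le> t" "t \<le> x m" "Lidstone_interp x y p t = Lidstone_piece x y p m t"
      using locate[of t] tI unfolding I_def by blast
    then show ?thesis by (intro Kp) (auto intro!: bexI[of _ m])
  qed
  define g where "g t = f t - Lidstone_interp x y p t" for t
  define S where "S = sup_norm (x 0) (x N) g"
  define \<Phi> where "\<Phi> = sup_norm (x 0) (x N) (Lidstone_interp x y p)"
  have bddg: "bdd_above ((\<lambda>t. \<bar>g t\<bar>) ` I)"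
    by (rule bdd_aboveI2[of _ _ "Kf + Kp"]) (use Kf phib in \<open>force simp: g_def\<close>)
  have bddp: "bdd_above ((\<lambda>t. \<bar>Lidstone_interp x y p t\<bar>) ` I)"
    by (rule bdd_aboveI2[of _ _ Kp]) (use phib in auto)
  have gS: "\<bar>g t\<bar> \<le> S" if "t \<in> I" for t
    unfolding S_def sup_norm_def I_def[symmetric] using that bddg by (rule cSUP_upper)
  have pS: "\<bar>Lidstone_interp x y p t\<bar> \<le> \<Phi>" if "t \<in> I" for t
    unfolding \<Phi>_def sup_norm_def I_def[symmetric] using that bddp by (rule cSUP_upper)
  have Ine: "I \<noteq> {}" unfolding I_def using Dpos D_def by auto
  have key: "\<bar>g t\<bar> \<le> A * (S + \<Phi> + M0 x y N p)" if t: "t \<in> I" for t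
  proof -
    obtain m s where ms: "m \<in> {1..N}" "s \<in> {x 0..x N}" "t = L_map x N m s"
      "Lidstone_interp x y p t = Lidstone_piece x y p m t"
      using locate[of t] t unfolding I_def by blast
    have "f t = \<alpha> m * f s + q_fun x y N p \<alpha> m s"
      using assms(4) ms unfolding is_Lidstone_FIF_def by auto
    moreover have "Lidstone_interp x y p t = q_fun x y N p \<alpha> m s + \<alpha> m * B s"
    proof -
      have "Lidstone_interp x y p t = Lidstone_piece x y p m (L_map x N m s)" using ms(3,4) by simp
      also have "\<dots> = q_fun x y N p \<alpha> m s + \<alpha> m * B s"
        unfolding B_def by (rule piece_identity) (use Dpos hpos[OF ms(1)] D_def in auto)
      finally show ?thesis .
    qed
    ultimately have "g t = \<alpha> m * (g s + Lidstone_interp x y p s - B s)"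
      unfolding g_def by (simp add: algebra_simps)
    then have "\<bar>g t\<bar> = \<bar>\<alpha> m\<bar> * \<bar>g s + Lidstone_interp x y p s - B s\<bar>" by (simp add: abs_mult)
    also have "\<dots> \<le> A * (S + \<Phi> + M0 x y N p)"
    proof (rule mult_mono)
      have sI: "s \<in> I" using ms unfolding I_def by simp
      have "\<bar>g s + Lidstone_interp x y p s - B s\<bar> \<le> \<bar>g s\<bar> + \<bar>Lidstone_interp x y p s\<bar> + \<bar>B s\<bar>"
        by linarith
      then show "\<bar>g s + Lidstone_interp x y p s - B s\<bar> \<le> S + \<Phi> + M0 x y N p"
        using gS[OF sI] pS[OF sI] B_bound[OF ms(2)] by linarith
    qed (use Age[OF ms(1)] A0 in auto)
    finally show ?thesis .
  qed
  have "(SUP t\<in>I. \<bar>g t\<bar>) \<le> A * (S + \<Phi> + M0 x y N p)"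
    using Ine key by (intro cSUP_least) auto
  then have "S \<le> A * (S + \<Phi> + M0 x y N p)"
    unfolding S_def sup_norm_def I_def by simp
  then have "S * (1 - A) \<le> A * (\<Phi> + M0 x y N p)" by (simp add: algebra_simps)
  then have "S \<le> A * (\<Phi> + M0 x y N p) / (1 - A)" using A1 by (simp add: le_divide_eq)
  then show ?thesis unfolding S_def \<Phi>_def A_def g_def by simp
qed


end
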